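(* Let $(B^{*,*},\delta_h,\delta_v)$ be a bicomplex of vector spaces ($\delta_h:B^{p,q}\to B^{p+1,q}$, $\delta_v:B^{p,q}\to B^{p,q+1}$, $\delta_h^2=\delta_v^2=\delta_h\delta_v+\delta_v\delta_h=0$) such that (i) $B^{p,q}=0$ unless $0\le -p\le q$, (ii) $B^{p,*}=0$ for $p$ sufficiently negative, and (iii) $H^p(B^{*,q},\delta_h)=0$ whenever $p+q\ne0$. Let $Z_h^n$, $D^n$, $\pi_n$, $X^n$, $U$ and $\beta$ be as in the context. Then for each $n\geq 0$ and $z\in Z_h^n$, the element $\beta(z)\in\bigoplus_{p\geq n}B^{-p,p}$ is a degree $0$ cocycle of the total complex $(B^*,\delta_h+\delta_v)$, $B^k=\bigoplus_{p+q=k}B^{p,q}$. Consequently, for every $z\in Z_h^n$, $\beta(z)$ is a cocycle of the total complex with $\beta(z)-z\in\bigoplus_{p>n}B^{-p,p}$.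
   Context: $Z_h^n:=\ker(\delta_h:B^{-n,n}\to B^{-n+1,n})$. For each $n\ge0$ choose a complementary subspace $D^n$ with $B^{-n,n}=Z_h^n\oplus D^n$, and let $\pi_n:B^{-n,n}\to D^n$ be the projection along $Z_h^n$. Let $X^n:=\ker(\delta_v\delta_h:B^{-n,n}\to B^{-n+1,n+1})$. For $x\in X^n$ define $U(x):=\pi_{n+1}(u)$ where $u\in B^{-n-1,n+1}$ is any element with $\delta_h u=\delta_v x$ (such $u$ exists and $U(x)$ does not depend on its choice, and $U(x)\in X^{n+1}$). For $z\in Z_h^n$ define $\beta(z):=z-U(z)+U^2(z)-U^3(z)+\cdots$ (a finite sum). *)

theory Defs
  imports Complex_Main
begin

text \<open>A bigraded family of vector spaces is modelled as a family of subspaces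
  B p q of an ambient vector space (type 'v, scalars 'k via scale), together
  with families of maps dh p q : B p q -> B (p+1) q and dv p q : B p q -> B p (q+1).
  A cochain of total degree k is a function c :: int => 'v with c p in B p (k - p)
  (finitely supported).\<close>

definition Zh :: "(int \<Rightarrow> int \<Rightarrow> 'v set) \<Rightarrow> (int \<Rightarrow> int \<Rightarrow> 'v \<Rightarrow> 'v::ab_group_add) \<Rightarrow> nat \<Rightarrow> 'v set" where
  "Zh B dh n = {x \<in> B (- int n) (int n). dh (- int n) (int n) x = 0}"

definition proj :: "(int \<Rightarrow> int \<Rightarrow> 'v set) \<Rightarrow> (int \<Rightarrow> int \<Rightarrow> 'v \<Rightarrow> 'v::ab_group_add) \<Rightarrow> (nat \<Rightarrow> 'v set) \<Rightarrow> nat \<Rightarrow> 'v \<Rightarrow> 'v" where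
  "proj B dh D n b = (THE d. d \<in> D n \<and> b - d \<in> Zh B dh n)"

definition Uop :: "(int \<Rightarrow> int \<Rightarrow> 'v set) \<Rightarrow> (int \<Rightarrow> int \<Rightarrow> 'v \<Rightarrow> 'v::ab_group_add) \<Rightarrow> (int \<Rightarrow> int \<Rightarrow> 'v \<Rightarrow> 'v)
     \<Rightarrow> (nat \<Rightarrow> 'v set) \<Rightarrow> nat \<Rightarrow> 'v \<Rightarrow> 'v" where
  "Uop B dh dv D n x = proj B dh D (Suc n)
     (SOME u. u \<in> B (- int n - 1) (int n + 1) \<and> dh (- int n - 1) (int n + 1) u = dv (- int n) (int n) x)"

fun Uiter :: "(int \<Rightarrow> int \<Rightarrow> 'v set) \<Rightarrow> (int \<Rightarrow> int \<Rightarrow> 'v \<Rightarrow> 'v::ab_group_add) \<Rightarrow> (int \<Rightarrow> int \<Rightarrow> 'v \<Rightarrow> 'v)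
     \<Rightarrow> (nat \<Rightarrow> 'v set) \<Rightarrow> nat \<Rightarrow> nat \<Rightarrow> 'v \<Rightarrow> 'v" where
  "Uiter B dh dv D n 0 z = z"
| "Uiter B dh dv D n (Suc k) z = Uop B dh dv D (n + k) (Uiter B dh dv D n k z)"

text \<open>beta(z) = z - U z + U^2 z - ..., as a total cochain of degree 0:
  its component in B^{p,-p} (p = -(n+k)) is (-1)^k U^k z, all other components are 0.\<close>
definition beta :: "(int \<Rightarrow> int \<Rightarrow> 'v set) \<Rightarrow> (int \<Rightarrow> int \<Rightarrow> 'v \<Rightarrow> 'v::ab_group_add) \<Rightarrow> (int \<Rightarrow> int \<Rightarrow> 'v \<Rightarrow> 'v)
     \<Rightarrow> (nat \<Rightarrow> 'v set) \<Rightarrow> nat \<Rightarrow> 'v \<Rightarrow> int \<Rightarrow> 'v" where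
  "beta B dh dv D n z p =
     (if p \<le> - int n then
        (let k = nat (- p - int n) in
          (if even k then Uiter B dh dv D n k z else - Uiter B dh dv D n k z))
      else 0)"

definition totald :: "(int \<Rightarrow> int \<Rightarrow> 'v \<Rightarrow> 'v::ab_group_add) \<Rightarrow> (int \<Rightarrow> int \<Rightarrow> 'v \<Rightarrow> 'v)
     \<Rightarrow> int \<Rightarrow> (int \<Rightarrow> 'v) \<Rightarrow> int \<Rightarrow> 'v" where
  "totald dh dv k c p = dh (p - 1) (k - (p - 1)) (c (p - 1)) + dv p (k - p) (c p)"

definition is_total_cochain :: "(int \<Rightarrow> int \<Rightarrow> 'v set) \<Rightarrow> int \<Rightarrow> (int \<Rightarrow> 'v::zero) \<Rightarrow> bool" where
  "is_total_cochain B k c \<longleftrightarrow> (\<forall>p. c p \<in> B p (k - p)) \<and> finite {p. c p \<noteq> 0}"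

end

theory Submission
  imports Defs
begin

theorem lemma5p2:
  fixes scale :: "'k::field \<Rightarrow> 'v::ab_group_add \<Rightarrow> 'v"
    and B :: "int \<Rightarrow> int \<Rightarrow> 'v set"
    and dh dv :: "int \<Rightarrow> int \<Rightarrow> 'v \<Rightarrow> 'v"
    and D :: "nat \<Rightarrow> 'v set"
    and n :: nat and z :: 'v
  assumes vs: "Vector_Spaces.vector_space scale"
    and sub: "\<And>p q. module.subspace scale (B p q)"
    and dh_maps: "\<And>p q x. x \<in> B p q \<Longrightarrow> dh p q x \<in> B (p + 1) q"
    and dv_maps: "\<And>p q x. x \<in> B p q \<Longrightarrow> dv p q x \<in> B p (q + 1)"
    and dh_add: "\<And>p q x y. x \<in> B p q \<Longrightarrow> y \<in> B p q \<Longrightarrow> dh p q (x + y) = dh p q x + dh p q y"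
    and dh_scale: "\<And>p q c x. x \<in> B p q \<Longrightarrow> dh p q (scale c x) = scale c (dh p q x)"
    and dv_add: "\<And>p q x y. x \<in> B p q \<Longrightarrow> y \<in> B p q \<Longrightarrow> dv p q (x + y) = dv p q x + dv p q y"
    and dv_scale: "\<And>p q c x. x \<in> B p q \<Longrightarrow> dv p q (scale c x) = scale c (dv p q x)"
    and dhdh: "\<And>p q x. x \<in> B p q \<Longrightarrow> dh (p + 1) q (dh p q x) = 0"
    and dvdv: "\<And>p q x. x \<in> B p q \<Longrightarrow> dv p (q + 1) (dv p q x) = 0"
    and anti: "\<And>p q x. x \<in> B p q \<Longrightarrow> dh p (q + 1) (dv p q x) + dv (p + 1) q (dh p q x) = 0"
    and supp: "\<And>p q. \<not> (0 \<le> - p \<and> - p \<le> q) \<Longrightarrow> B p q = {0}"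
    and bnd: "\<exists>N. \<forall>p q. p < N \<longrightarrow> B p q = {0}"
    and acyc: "\<And>p q x. p + q \<noteq> 0 \<Longrightarrow> x \<in> B p q \<Longrightarrow> dh p q x = 0 \<Longrightarrow>
                 \<exists>y \<in> B (p - 1) q. dh (p - 1) q y = x"
    and D_sub: "\<And>m. module.subspace scale (D m)"
    and D_in: "\<And>m. D m \<subseteq> B (- int m) (int m)"
    and D_int: "\<And>m. D m \<inter> Zh B dh m = {0}"
    and D_span: "\<And>m b. b \<in> B (- int m) (int m) \<Longrightarrow> \<exists>y \<in> Zh B dh m. \<exists>d \<in> D m. b = y + d"
    and z: "z \<in> Zh B dh n"
  shows "is_total_cochain B 0 (beta B dh dv D n z)
       \<and> (\<forall>p. totald dh dv 0 (beta B dh dv D n z) p = 0)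
       \<and> (\<forall>p. - int n < p \<longrightarrow> beta B dh dv D n z p = 0)
       \<and> beta B dh dv D n z (- int n) = z"
proof -
  interpret V: vector_space scale by (rule vs)
  have B0: "\<And>p q. 0 \<in> B p q" using sub V.subspace_0 by blast
  have Bneg: "\<And>p q x. x \<in> B p q \<Longrightarrow> - x \<in> B p q" using sub V.subspace_neg by blast
  have Bdiff: "\<And>p q x y. x \<in> B p q \<Longrightarrow> y \<in> B p q \<Longrightarrow> x - y \<in> B p q" using sub V.subspace_diff by blast
  have Ddiff: "\<And>m x y. x \<in> D m \<Longrightarrow> y \<in> D m \<Longrightarrow> x - y \<in> D m" using D_sub V.subspace_diff by blast
  have dh0: "\<And>p q. dh p q 0 = 0" using dh_add[OF B0 B0] by simp
  have dv0: "\<And>p q. dv p q 0 = 0" using dv_add[OF B0 B0] by simp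
  have dhneg: "dh p q (- x) = - dh p q x" if x: "x \<in> B p q" for p q x
  proof -
    have "dh p q x + dh p q (- x) = 0" using dh_add[OF x Bneg[OF x], symmetric] dh0 by simp
    then show ?thesis by (simp add: add_eq_0_iff)
  qed
  have dvneg: "dv p q (- x) = - dv p q x" if x: "x \<in> B p q" for p q x
  proof -
    have "dv p q x + dv p q (- x) = 0" using dv_add[OF x Bneg[OF x], symmetric] dv0 by simp
    then show ?thesis by (simp add: add_eq_0_iff)
  qed
  have dhdiff: "dh p q (x - y) = dh p q x - dh p q y" if x: "x \<in> B p q" and y: "y \<in> B p q" for p q x y
    using dh_add[OF x Bneg[OF y]] dhneg[OF y] by simp
  have projP: "proj B dh D m b \<in> D m \<and> b - proj B dh D m b \<in> Zh B dh m"
    if b: "b \<in> B (- int m) (int m)" for m b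
  proof -
    have "\<exists>!d. d \<in> D m \<and> b - d \<in> Zh B dh m"
    proof -
      obtain y d where y: "y \<in> Zh B dh m" and d: "d \<in> D m" and e: "b = y + d"
        using D_span[OF b] by blast
      have ex: "d \<in> D m \<and> b - d \<in> Zh B dh m" using y d e by simp
      have "d' = d" if d': "d' \<in> D m \<and> b - d' \<in> Zh B dh m" for d'
      proof -
        have "d' - d \<in> D m" using Ddiff d' d by blast
        moreover have "d' - d \<in> Zh B dh m"
        proof -
          have m1: "b - d \<in> B (- int m) (int m)" "dh (- int m) (int m) (b - d) = 0"
            "b - d' \<in> B (- int m) (int m)" "dh (- int m) (int m) (b - d') = 0"
            using ex d' unfolding Zh_def by auto
          have e: "(b - d) - (b - d') = d' - d" by simp
          have "(b - d) - (b - d') \<in> B (- int m) (int m)" using Bdiff[OF m1(1) m1(3)] .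
          moreover have "dh (- int m) (int m) ((b - d) - (b - d')) = 0"
            using dhdiff[OF m1(1) m1(3)] m1(2,4) by simp
          ultimately show ?thesis unfolding Zh_def e by simp
        qed
        ultimately have "d' - d \<in> D m \<inter> Zh B dh m" by blast
        then show ?thesis using D_int by auto
      qed
      then show ?thesis using ex by blast
    qed
    then show ?thesis unfolding proj_def by (rule theI')
  qed
  have Ulem: "Uop B dh dv D m x \<in> B (- int m - 1) (int m + 1)
      \<and> dh (- int m - 1) (int m + 1) (Uop B dh dv D m x) = dv (- int m) (int m) x
      \<and> dh (- int m - 1) (int m + 1 + 1) (dv (- int m - 1) (int m + 1) (Uop B dh dv D m x)) = 0"
    if x: "x \<in> B (- int m) (int m)" and X: "dh (- int m) (int m + 1) (dv (- int m) (int m) x) = 0" for m x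
  proof -
    have dvx: "dv (- int m) (int m) x \<in> B (- int m) (int m + 1)" using dv_maps[OF x] .
    have "\<exists>y \<in> B (- int m - 1) (int m + 1). dh (- int m - 1) (int m + 1) y = dv (- int m) (int m) x"
      using acyc[OF _ dvx X] by simp
    then have "\<exists>u. u \<in> B (- int m - 1) (int m + 1) \<and> dh (- int m - 1) (int m + 1) u = dv (- int m) (int m) x"
      by blast
    then have u: "(SOME u. u \<in> B (- int m - 1) (int m + 1) \<and> dh (- int m - 1) (int m + 1) u = dv (- int m) (int m) x)
       \<in> B (- int m - 1) (int m + 1) \<and> dh (- int m - 1) (int m + 1) (SOME u. u \<in> B (- int m - 1) (int m + 1) \<and> dh (- int m - 1) (int m + 1) u = dv (- int m) (int m) x) = dv (- int m) (int m) x"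
      by (rule someI_ex)
    define u where "u = (SOME u. u \<in> B (- int m - 1) (int m + 1) \<and> dh (- int m - 1) (int m + 1) u = dv (- int m) (int m) x)"
    have eqs: "int (Suc m) = int m + 1" "- (int m + 1) = - int m - 1" by simp_all
    have uB: "u \<in> B (- int (Suc m)) (int (Suc m))" using u unfolding u_def eqs by blast
    have U: "Uop B dh dv D m x = proj B dh D (Suc m) u" unfolding Uop_def u_def by simp
    from projP[OF uB] have P: "proj B dh D (Suc m) u \<in> D (Suc m)" "u - proj B dh D (Suc m) u \<in> Zh B dh (Suc m)" by auto
    have UB: "Uop B dh dv D m x \<in> B (- int m - 1) (int m + 1)"
      using P(1) D_in[of "Suc m"] U unfolding eqs by auto
    have "dh (- int m - 1) (int m + 1) (u - Uop B dh dv D m x) = 0"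
      using P(2) U unfolding Zh_def eqs by simp
    moreover have "u \<in> B (- int m - 1) (int m + 1)" using u unfolding u_def by simp
    ultimately have dhU: "dh (- int m - 1) (int m + 1) (Uop B dh dv D m x) = dv (- int m) (int m) x"
      using dhdiff[OF _ UB] u unfolding u_def[symmetric] by simp
    have "dh (- int m - 1) (int m + 1 + 1) (dv (- int m - 1) (int m + 1) (Uop B dh dv D m x))
        + dv (- int m - 1 + 1) (int m + 1) (dh (- int m - 1) (int m + 1) (Uop B dh dv D m x)) = 0"
      using anti[OF UB] .
    moreover have "dv (- int m - 1 + 1) (int m + 1) (dh (- int m - 1) (int m + 1) (Uop B dh dv D m x)) = 0"
      using dhU dvdv[OF x] by simp
    ultimately show ?thesis using UB dhU by simp
  qed
  have iter: "Uiter B dh dv D n k z \<in> B (- int (n + k)) (int (n + k))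
     \<and> dh (- int (n + k)) (int (n + k) + 1) (dv (- int (n + k)) (int (n + k)) (Uiter B dh dv D n k z)) = 0" for k
  proof (induction k)
    case 0
    have zB: "z \<in> B (- int n) (int n)" and dz: "dh (- int n) (int n) z = 0" using z unfolding Zh_def by auto
    have "dh (- int n) (int n + 1) (dv (- int n) (int n) z) + dv (- int n + 1) (int n) (dh (- int n) (int n) z) = 0"
      using anti[OF zB] .
    then show ?case using zB dz dv0 by simp
  next
    case (Suc k)
    have eqs: "int (n + Suc k) = int (n + k) + 1" "- (int (n + k) + 1) = - int (n + k) - 1" by simp_all
    from Ulem[of "Uiter B dh dv D n k z" "n + k"] Suc
    show ?case unfolding eqs by simp
  qed
  have rel: "dh (- int (n + k) - 1) (int (n + k) + 1) (Uiter B dh dv D n (Suc k) z)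
      = dv (- int (n + k)) (int (n + k)) (Uiter B dh dv D n k z)" for k
    using Ulem[of "Uiter B dh dv D n k z" "n + k"] iter[of k] by simp
  have bval: "beta B dh dv D n z (- int (n + k)) = (if even k then Uiter B dh dv D n k z else - Uiter B dh dv D n k z)" for k
    unfolding beta_def by (simp add: Let_def)
  have bzero: "beta B dh dv D n z p = 0" if "- int n < p" for p
    using that unfolding beta_def by simp
  have bgen: "\<exists>k. p = - int (n + k)" if "p \<le> - int n" for p
    using that by (intro exI[of _ "nat (- p - int n)"]) simp
  have bB: "beta B dh dv D n z p \<in> B p (0 - p)" for p
  proof (cases "p \<le> - int n")
    case True
    then obtain k where k: "p = - int (n + k)" using bgen by blast
    have e: "0 - (- int (n + k)) = int (n + k)" by simp
    have i: "Uiter B dh dv D n k z \<in> B (- int (n + k)) (int (n + k))" using iter[of k] by blast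
    show ?thesis unfolding k bval e using i Bneg[OF i] by simp
  next
    case False then show ?thesis using bzero B0 by simp
  qed
  obtain N where N: "\<forall>p q. p < N \<longrightarrow> B p q = {0}" using bnd by blast
  have "{p. beta B dh dv D n z p \<noteq> 0} \<subseteq> {N .. - int n}"
  proof
    fix p assume "p \<in> {p. beta B dh dv D n z p \<noteq> 0}"
    then have ne: "beta B dh dv D n z p \<noteq> 0" by simp
    then have "\<not> - int n < p" using bzero by blast
    moreover have "\<not> p < N" using ne bB[of p] N by auto
    ultimately show "p \<in> {N .. - int n}" by simp
  qed
  then have fin: "finite {p. beta B dh dv D n z p \<noteq> 0}" by (rule finite_subset) simp
  have cyc: "totald dh dv 0 (beta B dh dv D n z) p = 0" for p
  proof -
    consider "1 - int n < p" | "p = 1 - int n" | "p \<le> - int n" by linarith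
    then show ?thesis
    proof cases
      case 1
      then show ?thesis unfolding totald_def using bzero[of p] bzero[of "p - 1"] dh0 dv0 by simp
    next
      case 2
      have "beta B dh dv D n z (p - 1) = z" using bval[of 0] 2 by simp
      moreover have "dh (- int n) (int n) z = 0" using z unfolding Zh_def by auto
      ultimately show ?thesis unfolding totald_def using bzero[of p] dv0 2 by simp
    next
      case 3
      then obtain k where k: "p = - int (n + k)" using bgen by blast
      have k1: "p - 1 = - int (n + Suc k)" using k by simp
      have eqs: "int (n + Suc k) = int (n + k) + 1" "- (int (n + k) + 1) = - int (n + k) - 1" by simp_all
      have i1: "Uiter B dh dv D n (Suc k) z \<in> B (- int (n + k) - 1) (int (n + k) + 1)"
        using iter[of "Suc k"] unfolding eqs by simp
      have i0: "Uiter B dh dv D n k z \<in> B (- int (n + k)) (int (n + k))" using iter[of k] by simp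
      have e1: "0 - (p - 1) = int (n + k) + 1" "0 - p = int (n + k)" "p - 1 = - int (n + k) - 1" using k by simp_all
      have c1: "beta B dh dv D n z (p - 1) = (if even (Suc k) then Uiter B dh dv D n (Suc k) z else - Uiter B dh dv D n (Suc k) z)"
        unfolding k1 by (rule bval)
      have c0: "beta B dh dv D n z p = (if even k then Uiter B dh dv D n k z else - Uiter B dh dv D n k z)"
        unfolding k by (rule bval)
      have T: "totald dh dv 0 (beta B dh dv D n z) p = dh (- int (n + k) - 1) (int (n + k) + 1) (beta B dh dv D n z (p - 1))
          + dv (- int (n + k)) (int (n + k)) (beta B dh dv D n z p)"
        unfolding totald_def e1(1) e1(2) unfolding e1(3) unfolding k ..
      show ?thesis
      proof (cases "even k")
        case True
        then show ?thesis unfolding T c1 c0 using rel[of k] dhneg[OF i1] by simp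
      next
        case False
        then show ?thesis unfolding T c1 c0 using rel[of k] dvneg[OF i0] by simp
      qed
    qed
  qed
  show ?thesis
    unfolding is_total_cochain_def using bB fin cyc bzero bval[of 0] by simp
qed

end
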